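(* Under the standing assumptions below, suppose in addition that $\{\pi_i\}_{i\in\mathbb{N}_0}$ is orthogonal with respect to $W^{(\alpha)}_\tau$ on $[-1,1]$ (e.g. a family of exceptional Gegenbauer polynomials), let $m\in\mathbb{N}_0$, $t\in\mathbb{R}$ with $1+t\nu_m>0$. Then for all $i\in\mathbb{N}_0$, $$\nu_{m;i}^{-1}=\nu_i^{-1}+\delta_{im}\,t,$$ i.e. $\nu_{m;i}=\nu_i$ for $i\ne m$ and $\nu_{m;m}=\nu_m/(1+t\nu_m)$.
   Context: For a nonzero function $\tau$ and $\alpha\in\mathbb{R}$, $W^{(\alpha)}_\tau=(1-z^2)^{\alpha-1/2}\tau^{-2}$ and $T^{(\alpha)}_\tau=(1-z^2)\left(D_z^2-2\frac{\tau_z}{\tau}D_z+\frac{\tau_{zz}}{\tau}\right)-(2\alpha+1)zD_z+(2\alpha-1)z\frac{\tau_z}{\tau}$. $T^{(\alpha)}_\tau$ is an exceptional Gegenbauer operator if it has polynomial eigenfunctions $\{\pi_i\}_{i\in\mathbb{N}_0}$ of pairwise distinct degrees, with only finitely many nonnegative integers missing from $\{\deg\pi_i\}$. Standing assumptions: $\alpha\in\mathbb{N}_0+\frac12$; $\tau$ is a polynomial with no zeros on $[-1,1]$ such that $T^{(\alpha)}_\tau$ is an exceptional Gegenbauer operator with eigenpolynomials $T^{(\alpha)}_\tau\pi_i=\lambda_i\pi_i$, the $\lambda_i$ pairwise distinct; $\rho_{ij}(z)=\int_{-1}^z\pi_i\pi_jW^{(\alpha)}_\tau\,du$; $\tau_m(z,t)=\tau(z)(1+t\rho_{mm}(z))$;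 $\pi_{m;i}(z,t)=(1+t\rho_{mm})\pi_i-t\rho_{im}\pi_m$; and it is assumed that all $\rho_{ij}$ are rational functions of $z$ and all $\tau_m,\pi_{m;i}$ are polynomials in $z$. Norms: $\nu_i=\int_{-1}^1\pi_i^2W^{(\alpha)}_\tau\,dz$ and $\nu_{m;i}=\int_{-1}^1\pi_{m;i}^2W^{(\alpha)}_{\tau_m}\,dz$. *)

theory Defs
  imports "HOL-Analysis.Analysis" "HOL-Computational_Algebra.Polynomial"
begin

definition xg_weight :: "real \<Rightarrow> (real \<Rightarrow> real) \<Rightarrow> real \<Rightarrow> real" where
  "xg_weight \<alpha> f z = (1 - z\<^sup>2) powr (\<alpha> - 1/2) / (f z)\<^sup>2"

definition xg_op :: "real \<Rightarrow> real poly \<Rightarrow> real poly \<Rightarrow> real \<Rightarrow> real" where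
  "xg_op \<alpha> \<tau> p z =
     (1 - z\<^sup>2) * (poly (pderiv (pderiv p)) z
                   - 2 * (poly (pderiv \<tau>) z / poly \<tau> z) * poly (pderiv p) z
                   + (poly (pderiv (pderiv \<tau>)) z / poly \<tau> z) * poly p z)
     - (2 * \<alpha> + 1) * z * poly (pderiv p) z
     + (2 * \<alpha> - 1) * z * (poly (pderiv \<tau>) z / poly \<tau> z) * poly p z"

definition xg_eigenpoly :: "real \<Rightarrow> real poly \<Rightarrow> real poly \<Rightarrow> real \<Rightarrow> bool" where
  "xg_eigenpoly \<alpha> \<tau> p lam \<longleftrightarrow> p \<noteq> 0 \<and>
     (\<forall>z. poly \<tau> z \<noteq> 0 \<longrightarrow> xg_op \<alpha> \<tau> p z = lam * poly p z)"

definition xg_eigenfamily :: "real \<Rightarrow> real poly \<Rightarrow> (nat \<Rightarrow> real poly) \<Rightarrow> (nat \<Rightarrow> real) \<Rightarrow> bool" where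
  "xg_eigenfamily \<alpha> \<tau> \<pi> lam \<longleftrightarrow>
     (\<forall>i. xg_eigenpoly \<alpha> \<tau> (\<pi> i) (lam i)) \<and>
     inj (\<lambda>i. degree (\<pi> i)) \<and>
     finite (UNIV - range (\<lambda>i. degree (\<pi> i)))"

definition exceptional_gegenbauer_op :: "real \<Rightarrow> real poly \<Rightarrow> bool" where
  "exceptional_gegenbauer_op \<alpha> \<tau> \<longleftrightarrow> (\<exists>\<pi> lam. xg_eigenfamily \<alpha> \<tau> \<pi> lam)"

definition xg_rho :: "real \<Rightarrow> real poly \<Rightarrow> (nat \<Rightarrow> real poly) \<Rightarrow> nat \<Rightarrow> nat \<Rightarrow> real \<Rightarrow> real" where
  "xg_rho \<alpha> \<tau> \<pi> i j z =
     integral {-1..z} (\<lambda>u. poly (\<pi> i) u * poly (\<pi> j) u * xg_weight \<alpha> (poly \<tau>) u)"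

definition xg_tau_m :: "real \<Rightarrow> real poly \<Rightarrow> (nat \<Rightarrow> real poly) \<Rightarrow> nat \<Rightarrow> real \<Rightarrow> real \<Rightarrow> real" where
  "xg_tau_m \<alpha> \<tau> \<pi> m t z = poly \<tau> z * (1 + t * xg_rho \<alpha> \<tau> \<pi> m m z)"

definition xg_pi_m :: "real \<Rightarrow> real poly \<Rightarrow> (nat \<Rightarrow> real poly) \<Rightarrow> nat \<Rightarrow> nat \<Rightarrow> real \<Rightarrow> real \<Rightarrow> real" where
  "xg_pi_m \<alpha> \<tau> \<pi> m i t z =
     (1 + t * xg_rho \<alpha> \<tau> \<pi> m m z) * poly (\<pi> i) z - t * xg_rho \<alpha> \<tau> \<pi> i m z * poly (\<pi> m) z"

definition xg_nu :: "real \<Rightarrow> real poly \<Rightarrow> (nat \<Rightarrow> real poly) \<Rightarrow> nat \<Rightarrow> real" where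
  "xg_nu \<alpha> \<tau> \<pi> i = integral {-1..1} (\<lambda>z. (poly (\<pi> i) z)\<^sup>2 * xg_weight \<alpha> (poly \<tau>) z)"

definition xg_nu_m :: "real \<Rightarrow> real poly \<Rightarrow> (nat \<Rightarrow> real poly) \<Rightarrow> nat \<Rightarrow> real \<Rightarrow> nat \<Rightarrow> real" where
  "xg_nu_m \<alpha> \<tau> \<pi> m t i = integral {-1..1}
     (\<lambda>z. (xg_pi_m \<alpha> \<tau> \<pi> m i t z)\<^sup>2 * xg_weight \<alpha> (xg_tau_m \<alpha> \<tau> \<pi> m t) z)"

end

theory Submission
  imports Defs
begin

theorem mainTheorem13:
  fixes \<alpha> :: real and \<tau> :: "real poly" and \<pi> :: "nat \<Rightarrow> real poly"
    and lam :: "nat \<Rightarrow> real" and m :: nat and t :: real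
  assumes alpha: "\<exists>k::nat. \<alpha> = real k + 1/2"
    and tau_nz: "\<forall>z\<in>{-1..1}. poly \<tau> z \<noteq> 0"
    and family: "xg_eigenfamily \<alpha> \<tau> \<pi> lam"
    and lam_inj: "inj lam"
    and rho_rat: "\<forall>i j. \<exists>p q. \<forall>z\<in>{-1..1}. poly q z \<noteq> 0 \<and>
                     xg_rho \<alpha> \<tau> \<pi> i j z = poly p z / poly q z"
    and tau_m_poly: "\<forall>m' t'. \<exists>P. \<forall>z\<in>{-1..1}. xg_tau_m \<alpha> \<tau> \<pi> m' t' z = poly P z"
    and pi_m_poly: "\<forall>m' i t'. \<exists>P. \<forall>z\<in>{-1..1}. xg_pi_m \<alpha> \<tau> \<pi> m' i t' z = poly P z"
    and orth: "\<forall>i j. i \<noteq> j \<longrightarrow>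
                 integral {-1..1} (\<lambda>z. poly (\<pi> i) z * poly (\<pi> j) z * xg_weight \<alpha> (poly \<tau>) z) = 0"
    and pos: "1 + t * xg_nu \<alpha> \<tau> \<pi> m > 0"
  shows "\<forall>i. inverse (xg_nu_m \<alpha> \<tau> \<pi> m t i)
              = inverse (xg_nu \<alpha> \<tau> \<pi> i) + (if i = m then t else 0)"
proof -
  obtain k :: nat where k: "\<alpha> = real k + 1/2" using alpha by blast
  define w where "w z = (1 - z^2)^k / (poly \<tau> z)^2" for z
  define g where "g i j u = poly (\<pi> i) u * poly (\<pi> j) u * w u" for i j u
  define R where "R i j z = integral {-1..z} (g i j)" for i j z
  have open_sq: "0 < 1 - z^2" if "z \<in> {-1<..<1}" for z :: real
  proof -
    have "\<bar>z\<bar> < 1" using that by auto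
    hence "z^2 < 1" by (simp add: abs_square_less_1)
    thus ?thesis by simp
  qed
  have W_eq: "xg_weight \<alpha> (poly \<tau>) z = w z" if "z \<in> {-1<..<1}" for z
    using open_sq[OF that] unfolding xg_weight_def w_def by (simp add: k powr_realpow)
  have negl: "negligible {-1, 1::real}" by auto
  have wcont: "continuous_on {-1..1} w"
    unfolding w_def using tau_nz by (intro continuous_intros) auto
  have gcont: "continuous_on {-1..1} (g i j)" for i j
    unfolding g_def using wcont by (intro continuous_intros) auto
  have gint: "g i j integrable_on {-1..z}" if "z \<le> 1" for i j z
    using continuous_on_subset[OF gcont[of i j], of "{-1..z}"] that
    by (intro integrable_continuous_interval) auto
  have rho_eq: "xg_rho \<alpha> \<tau> \<pi> i j z = R i j z" if "z \<in> {-1..1}" for i j z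
    unfolding xg_rho_def R_def
  proof (rule integral_spike[OF negl])
    fix x assume "x \<in> {-1..z} - {-1, 1}"
    hence "x \<in> {-1<..<1}" using that by auto
    thus "g i j x = poly (\<pi> i) x * poly (\<pi> j) x * xg_weight \<alpha> (poly \<tau>) x"
      using W_eq g_def by simp
  qed
  have Rder: "(R i j has_vector_derivative g i j z) (at z within {-1..1})"
    if "z \<in> {-1..1}" for i j z
    unfolding R_def by (rule integral_has_vector_derivative[OF gcont that])
  have R0: "R i j (-1) = 0" for i j by (simp add: R_def)
  have nu_eq: "xg_nu \<alpha> \<tau> \<pi> i = R i i 1" for i
    unfolding xg_nu_def R_def
  proof (rule integral_spike[OF negl])
    fix x assume "x \<in> {-1..1} - {-1, 1::real}"
    hence "x \<in> {-1<..<1}" by auto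
    thus "g i i x = (poly (\<pi> i) x)\<^sup>2 * xg_weight \<alpha> (poly \<tau>) x"
      using W_eq g_def by (simp add: power2_eq_square)
  qed
  have orthR: "R i j 1 = 0" if "i \<noteq> j" for i j
  proof -
    have "R i j 1 = xg_rho \<alpha> \<tau> \<pi> i j 1" using rho_eq by simp
    also have "\<dots> = 0" using orth that unfolding xg_rho_def by simp
    finally show ?thesis .
  qed
  have gnn: "0 \<le> g m m z" if "z \<in> {-1..1}" for z
  proof -
    have "z^2 \<le> 1" using that abs_square_le_1 by force
    thus ?thesis unfolding g_def w_def by (simp add: power2_eq_square[symmetric])
  qed
  have Rlo: "0 \<le> R m m z" if "z \<in> {-1..1}" for z
    unfolding R_def using that gint[of z m m] gnn by (intro integral_nonneg) auto
  have Rhi: "R m m z \<le> R m m 1" if "z \<in> {-1..1}" for z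
    unfolding R_def using that gint[of z m m] gint[of 1 m m] gnn
    by (intro integral_subset_le) auto
  have pos': "0 < 1 + t * R m m 1" using pos nu_eq by simp
  have upos: "0 < 1 + t * R m m z" if "z \<in> {-1..1}" for z
  proof (cases "t \<ge> 0")
    case True thus ?thesis using Rlo[OF that] by (smt (verit) mult_nonneg_nonneg)
  next
    case False
    hence "t * R m m 1 \<le> t * R m m z" using Rhi[OF that] by (simp add: mult_left_mono_neg)
    thus ?thesis using pos' by linarith
  qed
  have num_pos: "0 < R m m 1"
  proof (rule ccontr)
    assume "\<not> 0 < R m m 1"
    hence "R m m 1 = 0" using Rlo[of 1] by simp
    hence "\<forall>x\<in>{-1..1}. g m m x = 0"
      using integral_eq_0_iff[OF gcont[of m m], of ] gnn unfolding R_def by simp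
    have "{-1<..<1::real} \<subseteq> {x. poly (\<pi> m) x = 0}"
    proof
      fix x :: real assume xo: "x \<in> {-1<..<1}"
      hence "g m m x = 0" using \<open>\<forall>x\<in>{-1..1}. g m m x = 0\<close> by auto
      moreover have "w x \<noteq> 0" using open_sq[OF xo] xo tau_nz unfolding w_def by auto
      ultimately show "x \<in> {x. poly (\<pi> m) x = 0}" unfolding g_def by simp
    qed
    moreover have "\<pi> m \<noteq> 0" using family unfolding xg_eigenfamily_def xg_eigenpoly_def by blast
    hence "finite {x. poly (\<pi> m) x = 0}" by (rule poly_roots_finite)
    ultimately have "finite {-1<..<1::real}" using finite_subset by blast
    thus False using infinite_Ioo[of "-1::real" 1] by simp
  qed
  have main: "xg_nu_m \<alpha> \<tau> \<pi> m t i = R i i 1 - t * (R i m 1)^2 / (1 + t * R m m 1)" for i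
  proof -
    define u where "u z = 1 + t * R m m z" for z
    define F where "F z = t * (R i m z)^2 / u z" for z
    define F' where "F' z = t * (2 * R i m z * g i m z * u z - (R i m z)^2 * (t * g m m z)) / (u z)^2" for z
    have Fd: "(F has_vector_derivative F' z) (at z within {-1..1})" if z: "z \<in> {-1..1}" for z
    proof -
      have d1: "(R i m has_real_derivative g i m z) (at z within {-1..1})"
        using Rder[OF z] by (simp add: has_real_derivative_iff_has_vector_derivative)
      have d2: "(R m m has_real_derivative g m m z) (at z within {-1..1})"
        using Rder[OF z] by (simp add: has_real_derivative_iff_has_vector_derivative)
      have un: "u z \<noteq> 0" using upos[OF z] u_def by simp
      have "(F has_real_derivative F' z) (at z within {-1..1})"
        unfolding F_def u_def F'_def
        apply (rule derivative_eq_intros d1 d2 | simp)+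
        using un unfolding u_def
         apply simp
        by (rule arg_cong2[where f="(/)"]; simp add: power2_eq_square algebra_simps)
      thus ?thesis by (simp add: has_real_derivative_iff_has_vector_derivative)
    qed
    have I1: "(F' has_integral (F 1 - F (-1))) {-1..1}"
      by (rule fundamental_theorem_of_calculus) (auto intro: Fd)
    have I2: "(g i i has_integral R i i 1) {-1..1}"
      unfolding R_def using gint[of 1 i i] by (simp add: integrable_integral)
    have I3: "((\<lambda>z. g i i z - F' z) has_integral (R i i 1 - (F 1 - F (-1)))) {-1..1}"
      using has_integral_diff[OF I2 I1] by simp
    have I4: "((\<lambda>z. (xg_pi_m \<alpha> \<tau> \<pi> m i t z)\<^sup>2 * xg_weight \<alpha> (xg_tau_m \<alpha> \<tau> \<pi> m t) z)
               has_integral (R i i 1 - (F 1 - F (-1)))) {-1..1}"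
    proof (rule has_integral_spike[OF negl _ I3])
      fix x assume "x \<in> {-1..1} - {-1, 1::real}"
      hence xo: "x \<in> {-1<..<1}" and xc: "x \<in> {-1..1}" by auto
      have un: "u x \<noteq> 0" using upos[OF xc] u_def by simp
      have tn: "poly \<tau> x \<noteq> 0" using tau_nz xc by auto
      have sq: "0 < 1 - x^2" using open_sq[OF xo] .
      have e1: "xg_pi_m \<alpha> \<tau> \<pi> m i t x = u x * poly (\<pi> i) x - t * R i m x * poly (\<pi> m) x"
        unfolding xg_pi_m_def u_def using rho_eq[OF xc] by simp
      have e2: "xg_weight \<alpha> (xg_tau_m \<alpha> \<tau> \<pi> m t) x = (1 - x^2)^k / (poly \<tau> x * u x)^2"
        unfolding xg_weight_def xg_tau_m_def u_def using rho_eq[OF xc] sq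
        by (simp add: k powr_realpow)
      show "(xg_pi_m \<alpha> \<tau> \<pi> m i t x)\<^sup>2 * xg_weight \<alpha> (xg_tau_m \<alpha> \<tau> \<pi> m t) x
          = g i i x - F' x"
        unfolding e1 e2 F'_def g_def w_def using un tn
        by (simp add: field_simps power2_eq_square)
    qed
    have "xg_nu_m \<alpha> \<tau> \<pi> m t i = R i i 1 - (F 1 - F (-1))"
      unfolding xg_nu_m_def using I4 by (rule integral_unique)
    thus ?thesis unfolding F_def u_def by (simp add: R0)
  qed
  show ?thesis
  proof
    fix i
    show "inverse (xg_nu_m \<alpha> \<tau> \<pi> m t i) = inverse (xg_nu \<alpha> \<tau> \<pi> i) + (if i = m then t else 0)"
    proof (cases "i = m")
      case True
      have "xg_nu_m \<alpha> \<tau> \<pi> m t i = R m m 1 / (1 + t * R m m 1)"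
        using main[of i] True pos' by (simp add: field_simps power2_eq_square)
      hence "inverse (xg_nu_m \<alpha> \<tau> \<pi> m t i) = (1 + t * R m m 1) / R m m 1"
        by (simp add: inverse_eq_divide)
      also have "\<dots> = inverse (R m m 1) + t" using num_pos by (simp add: field_simps)
      finally show ?thesis using True nu_eq by simp
    next
      case False
      thus ?thesis using main[of i] orthR[OF False] nu_eq by simp
    qed
  qed
qed

end
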